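(* Let $(M,\varphi,\xi,\eta,g)$ be a Sasaki-like almost contact B-metric manifold with the curvature property $Q\cdot R=0$, i.e. $R(x,y,z,Qw)-R(Qx,y,z,w)-R(x,Qy,z,w)-R(x,y,Qz,w)=0$ for all vector fields $x,y,z,w$. Then the manifold does not admit a Ricci-like soliton with vertical potential (i.e. with potential $v=k\xi$ for a differentiable function $k$).
   Context: An almost contact B-metric manifold $(M,\varphi,\xi,\eta,g)$ is a $(2n+1)$-dimensional manifold with a $(1,1)$-tensor $\varphi$, a vector field $\xi$, a 1-form $\eta$ and a pseudo-Riemannian metric $g$ of signature $(n+1,n)$ such that $\varphi\xi=0$, $\varphi^2=-\mathrm{Id}+\eta\otimes\xi$, $\eta\circ\varphi=0$, $\eta(\xi)=1$, and $g(\varphi x,\varphi y)=-g(x,y)+\eta(x)\eta(y)$. The associated B-metric is $\tilde g(x,y)=g(x,\varphi y)+\eta(x)\eta(y)$. With $\nabla$ the Levi-Civita connection of $g$, the manifold is Sasaki-like if $(\nabla_x\varphi)y=-g(x,y)\xi-\eta(y)x+2\eta(x)\eta(y)\xi$. $R$ is the curvature tensor of $\nabla$, $R(x,y,z,w)=g(R(x,y)z,w)$, $\rho$ the Ricci tensor and $Q$ the Ricci operator, $g(Qx,y)=\rho(x,y)$. It admits a Ricci-like soliton with potential vector field $v$ and constants $(\lambda,\mu,\nu)$ if $\frac12\mathcal L_v g+\rho+\lambda g+\mu\tilde g+\nu\,\eta\otimes\eta=0$, where $\mathcal L$ is the Lie derivative. *)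

theory Defs
  imports "HOL-Analysis.Analysis"
begin

text \<open>Local (coordinate) model: the manifold is an open set U of real^'n,
  tangent vectors are elements of real^'n, vector fields are maps U -> real^'n,
  the metric is a symmetric-matrix valued field G, phi a matrix field,
  xi a vector field and eta a covector field (eta(x) = eta p \<bullet> x).\<close>

type_synonym 'n vf = "real^'n \<Rightarrow> real^'n"

fun dpart :: "'n::finite list \<Rightarrow> (real^'n \<Rightarrow> 'b::real_normed_vector) \<Rightarrow> real^'n \<Rightarrow> 'b" where
  "dpart [] f = f"
| "dpart (i # is) f = (\<lambda>p. frechet_derivative (dpart is f) (at p) (axis i 1))"

definition cinf_on :: "(real^'n::finite) set \<Rightarrow> (real^'n \<Rightarrow> 'b::real_normed_vector) \<Rightarrow> bool" where
  "cinf_on U f \<longleftrightarrow> (\<forall>is p. p \<in> U \<longrightarrow> dpart is f differentiable (at p))"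

definition dd :: "(real^'n::finite \<Rightarrow> 'b::real_normed_vector) \<Rightarrow> real^'n \<Rightarrow> real^'n \<Rightarrow> 'b" where
  "dd f p u = frechet_derivative f (at p) u"

definition gmet :: "(real^'n::finite \<Rightarrow> real^'n^'n) \<Rightarrow> real^'n \<Rightarrow> real^'n \<Rightarrow> real^'n \<Rightarrow> real" where
  "gmet G p u w = u \<bullet> (G p *v w)"

text \<open>Christoffel symbols of the Levi-Civita connection of G.\<close>
definition chr :: "(real^'n::finite \<Rightarrow> real^'n^'n) \<Rightarrow> real^'n \<Rightarrow> real^'n \<Rightarrow> real^'n \<Rightarrow> real^'n" where
  "chr G p u w = matrix_inv (G p) *v (\<chi> k. (1/2) *
      (w \<bullet> (dd G p u *v axis k 1) + u \<bullet> (dd G p w *v axis k 1)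
       - u \<bullet> (dd G p (axis k 1) *v w)))"

definition cov :: "(real^'n::finite \<Rightarrow> real^'n^'n) \<Rightarrow> 'n vf \<Rightarrow> 'n vf \<Rightarrow> 'n vf" where
  "cov G X Y = (\<lambda>p. dd Y p (X p) + chr G p (X p) (Y p))"

definition bracket :: "'n::finite vf \<Rightarrow> 'n vf \<Rightarrow> 'n vf" where
  "bracket X Y = (\<lambda>p. dd Y p (X p) - dd X p (Y p))"

definition curv :: "(real^'n::finite \<Rightarrow> real^'n^'n) \<Rightarrow> 'n vf \<Rightarrow> 'n vf \<Rightarrow> 'n vf \<Rightarrow> 'n vf" where
  "curv G X Y Z = (\<lambda>p. cov G X (cov G Y Z) p - cov G Y (cov G X Z) p - cov G (bracket X Y) Z p)"

definition R4 :: "(real^'n::finite \<Rightarrow> real^'n^'n) \<Rightarrow> 'n vf \<Rightarrow> 'n vf \<Rightarrow> 'n vf \<Rightarrow> 'n vf \<Rightarrow> real^'n \<Rightarrow> real" where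
  "R4 G X Y Z W p = gmet G p (curv G X Y Z p) (W p)"

definition ricci :: "(real^'n::finite \<Rightarrow> real^'n^'n) \<Rightarrow> 'n vf \<Rightarrow> 'n vf \<Rightarrow> real^'n \<Rightarrow> real" where
  "ricci G Y Z p = (\<Sum>i\<in>UNIV. curv G (\<lambda>_. axis i 1) Y Z p $ i)"

text \<open>Ricci operator Q, g(QX,Y) = rho(X,Y).\<close>
definition ricci_op :: "(real^'n::finite \<Rightarrow> real^'n^'n) \<Rightarrow> 'n vf \<Rightarrow> 'n vf" where
  "ricci_op G X = (\<lambda>p. matrix_inv (G p) *v (\<chi> j. ricci G X (\<lambda>_. axis j 1) p))"

definition metric_sig :: "(real^'n::finite) set \<Rightarrow> nat \<Rightarrow> (real^'n \<Rightarrow> real^'n^'n) \<Rightarrow> bool" where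
  "metric_sig U n G \<longleftrightarrow> (\<forall>p\<in>U. transpose (G p) = G p \<and> invertible (G p) \<and>
     (\<exists>P N. subspace P \<and> subspace N \<and> dim P = n + 1 \<and> dim N = n \<and>
        (\<forall>u\<in>P. u \<noteq> 0 \<longrightarrow> gmet G p u u > 0) \<and>
        (\<forall>u\<in>N. u \<noteq> 0 \<longrightarrow> gmet G p u u < 0)))"

definition smooth_vf :: "(real^'n::finite) set \<Rightarrow> 'n vf \<Rightarrow> bool" where
  "smooth_vf U X \<longleftrightarrow> cinf_on U X"

definition acbm :: "(real^'n::finite) set \<Rightarrow> nat \<Rightarrow> (real^'n \<Rightarrow> real^'n^'n) \<Rightarrow> 'n vf \<Rightarrow> 'n vf
     \<Rightarrow> (real^'n \<Rightarrow> real^'n^'n) \<Rightarrow> bool" where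
  "acbm U n Phi xi eta G \<longleftrightarrow>
     open U \<and> CARD('n) = 2 * n + 1 \<and> n \<ge> 1 \<and>
     cinf_on U Phi \<and> cinf_on U xi \<and> cinf_on U eta \<and> cinf_on U G \<and>
     metric_sig U n G \<and>
     (\<forall>p\<in>U. Phi p *v xi p = 0 \<and> eta p \<bullet> xi p = 1 \<and>
        (\<forall>x. Phi p *v (Phi p *v x) = - x + (eta p \<bullet> x) *\<^sub>R xi p) \<and>
        (\<forall>x. eta p \<bullet> (Phi p *v x) = 0) \<and>
        (\<forall>x y. gmet G p (Phi p *v x) (Phi p *v y) = - gmet G p x y + (eta p \<bullet> x) * (eta p \<bullet> y)))"

definition gtil :: "(real^'n::finite \<Rightarrow> real^'n^'n) \<Rightarrow> (real^'n \<Rightarrow> real^'n^'n) \<Rightarrow> 'n vf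
    \<Rightarrow> real^'n \<Rightarrow> real^'n \<Rightarrow> real^'n \<Rightarrow> real" where
  "gtil G Phi eta p x y = gmet G p x (Phi p *v y) + (eta p \<bullet> x) * (eta p \<bullet> y)"

definition sasaki_like :: "(real^'n::finite) set \<Rightarrow> nat \<Rightarrow> (real^'n \<Rightarrow> real^'n^'n) \<Rightarrow> 'n vf \<Rightarrow> 'n vf
     \<Rightarrow> (real^'n \<Rightarrow> real^'n^'n) \<Rightarrow> bool" where
  "sasaki_like U n Phi xi eta G \<longleftrightarrow> acbm U n Phi xi eta G \<and>
     (\<forall>X Y. smooth_vf U X \<longrightarrow> smooth_vf U Y \<longrightarrow> (\<forall>p\<in>U.
        cov G X (\<lambda>q. Phi q *v Y q) p - Phi p *v cov G X Y p =
          - gmet G p (X p) (Y p) *\<^sub>R xi p - (eta p \<bullet> Y p) *\<^sub>R X p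
          + (2 * (eta p \<bullet> X p) * (eta p \<bullet> Y p)) *\<^sub>R xi p))"

definition QR_zero :: "(real^'n::finite) set \<Rightarrow> (real^'n \<Rightarrow> real^'n^'n) \<Rightarrow> bool" where
  "QR_zero U G \<longleftrightarrow> (\<forall>X Y Z W. smooth_vf U X \<longrightarrow> smooth_vf U Y \<longrightarrow> smooth_vf U Z \<longrightarrow> smooth_vf U W \<longrightarrow>
     (\<forall>p\<in>U. R4 G X Y Z (ricci_op G W) p - R4 G (ricci_op G X) Y Z W p
              - R4 G X (ricci_op G Y) Z W p - R4 G X Y (ricci_op G Z) W p = 0))"

definition lie_g :: "(real^'n::finite \<Rightarrow> real^'n^'n) \<Rightarrow> 'n vf \<Rightarrow> 'n vf \<Rightarrow> 'n vf \<Rightarrow> real^'n \<Rightarrow> real" where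
  "lie_g G v X Y p = dd (\<lambda>q. gmet G q (X q) (Y q)) p (v p)
      - gmet G p (bracket v X p) (Y p) - gmet G p (X p) (bracket v Y p)"

definition ricci_like_soliton :: "(real^'n::finite) set \<Rightarrow> (real^'n \<Rightarrow> real^'n^'n) \<Rightarrow> 'n vf \<Rightarrow> 'n vf
     \<Rightarrow> (real^'n \<Rightarrow> real^'n^'n) \<Rightarrow> 'n vf \<Rightarrow> real \<Rightarrow> real \<Rightarrow> real \<Rightarrow> bool" where
  "ricci_like_soliton U Phi xi eta G v lam mu nu \<longleftrightarrow>
     (\<forall>X Y. smooth_vf U X \<longrightarrow> smooth_vf U Y \<longrightarrow> (\<forall>p\<in>U.
        (1/2) * lie_g G v X Y p + ricci G X Y p + lam * gmet G p (X p) (Y p)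
        + mu * gtil G Phi eta p (X p) (Y p) + nu * (eta p \<bullet> X p) * (eta p \<bullet> Y p) = 0))"

end

theory Submission
  imports Defs
begin


lemma mv_bb: "bounded_bilinear (\<lambda>(A::real^'n::finite^'m::finite) (x::real^'n). A *v x)"
proof -
  have "bilinear (\<lambda>(A::real^'n::finite^'m::finite) (x::real^'n). A *v x)"
    unfolding bilinear_def
    by (auto intro!: linearI simp: matrix_vector_mult_add_rdistrib matrix_vector_right_distrib
        vec_eq_iff matrix_vector_mult_def sum_distrib_left sum.distrib algebra_simps)
  then show ?thesis by (simp add: bilinear_conv_bounded_bilinear)
qed


lemma dd_has: "f differentiable (at p) \<Longrightarrow> (f has_derivative dd f p) (at p)"
  unfolding dd_def fun_eq_iff using frechet_derivative_works by metis

lemma dd_eq: "(f has_derivative f') (at p) \<Longrightarrow> dd f p = f'"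
  unfolding dd_def fun_eq_iff using frechet_derivative_at by metis

lemma dd_linear: "f differentiable (at p) \<Longrightarrow> linear (dd f p)"
  using dd_has has_derivative_linear by blast

lemma dd_loc: assumes "open U" "p \<in> U" "\<And>q. q \<in> U \<Longrightarrow> f q = g q" shows "dd f p = dd g p"
proof -
  have "\<And>f'. (f has_derivative f') (at p) \<longleftrightarrow> (g has_derivative f') (at p)"
    using has_derivative_transform_within_open assms by (metis)
  then show ?thesis unfolding dd_def frechet_derivative_def by simp
qed

lemma minv: "invertible A \<Longrightarrow> A ** matrix_inv A = mat 1 \<and> matrix_inv A ** A = mat 1"
  unfolding invertible_def matrix_inv_def by (rule someI_ex)



lemma cinf_diff: "cinf_on U f \<Longrightarrow> p \<in> U \<Longrightarrow> f differentiable (at p)"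
  unfolding cinf_on_def by (metis dpart.simps(1))

lemma dpart_const:
  fixes c :: "'b::real_normed_vector" and "is" :: "'n::finite list"
  shows "\<exists>d. dpart is (\<lambda>_::real^'n. c) = (\<lambda>_. d)"
proof (induction "is")
  case Nil then show ?case by auto
next
  case (Cons i "is")
  then obtain d where d: "dpart is (\<lambda>_. c) = (\<lambda>_. d)" by blast
  have "\<And>p. frechet_derivative (\<lambda>_::real^'n. d) (at p) = (\<lambda>_. 0)"
    by (metis frechet_derivative_at has_derivative_const)
  then show ?case by (auto simp add: d)
qed

lemma const_smooth: "smooth_vf U (\<lambda>_. c)"
  unfolding smooth_vf_def cinf_on_def
proof (intro allI impI)
  fix "is" p
  obtain d where "dpart is (\<lambda>_. c) = (\<lambda>_. d)" using dpart_const by blast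
  then show "dpart is (\<lambda>_. c) differentiable at p" by simp
qed

lemma dd_const: "dd (\<lambda>_. c) p = (\<lambda>_. 0)"
  by (rule dd_eq) simp

lemma dd_mv:
  fixes A :: "real^'n::finite \<Rightarrow> real^'m::finite^'k::finite" and Y :: "real^'n \<Rightarrow> real^'m"
  assumes "A differentiable (at p)" "Y differentiable (at p)"
  shows "dd (\<lambda>q. A q *v Y q) p u = A p *v dd Y p u + dd A p u *v Y p"
  using dd_eq[OF bounded_bilinear.FDERIV[OF mv_bb dd_has[OF assms(1)] dd_has[OF assms(2)]]] by simp

lemma diff_mv:
  fixes A :: "real^'n::finite \<Rightarrow> real^'m::finite^'k::finite" and Y :: "real^'n \<Rightarrow> real^'m"
  assumes "A differentiable (at p)" "Y differentiable (at p)"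
  shows "(\<lambda>q. A q *v Y q) differentiable (at p)"
  using bounded_bilinear.FDERIV[OF mv_bb dd_has[OF assms(1)] dd_has[OF assms(2)]]
  unfolding differentiable_def by blast

lemma dd_gm:
  fixes G :: "real^'n::finite \<Rightarrow> real^'n^'n"
  assumes "G differentiable (at p)" "X differentiable (at p)" "Y differentiable (at p)"
  shows "dd (\<lambda>q. gmet G q (X q) (Y q)) p u
     = dd X p u \<bullet> (G p *v Y p) + X p \<bullet> (dd G p u *v Y p) + X p \<bullet> (G p *v dd Y p u)"
proof -
  have "((\<lambda>q. X q \<bullet> (G q *v Y q)) has_derivative
     (\<lambda>h. X p \<bullet> (G p *v dd Y p h + dd G p h *v Y p) + dd X p h \<bullet> (G p *v Y p))) (at p)"
    by (rule has_derivative_inner[OF dd_has[OF assms(2)] bounded_bilinear.FDERIV[OF mv_bb dd_has[OF assms(1)] dd_has[OF assms(3)]]])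
  from dd_eq[OF this] show ?thesis unfolding gmet_def by (simp add: inner_add_right algebra_simps)
qed

lemma dd_sc: assumes "k differentiable (at p)" "Y differentiable (at p)"
  shows "dd (\<lambda>q. k q *\<^sub>R Y q) p u = k p *\<^sub>R dd Y p u + dd k p u *\<^sub>R Y p"
  using dd_eq[OF has_derivative_scaleR[OF dd_has[OF assms(1)] dd_has[OF assms(2)]]] by simp

lemma dd_neg_sc_mv:
  fixes A :: "real^'n::finite \<Rightarrow> real^'m::finite^'k::finite" and Y :: "real^'n \<Rightarrow> real^'m"
  assumes "A differentiable (at p)" "Y differentiable (at p)"
  shows "dd (\<lambda>q. - (c *\<^sub>R (A q *v Y q))) p u = - (c *\<^sub>R (A p *v dd Y p u + dd A p u *v Y p))"
proof -
  have "((\<lambda>q. - (c *\<^sub>R (A q *v Y q))) has_derivative (\<lambda>h. - (c *\<^sub>R (A p *v dd Y p h + dd A p h *v Y p)))) (at p)"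
    by (intro has_derivative_minus has_derivative_scaleR_right bounded_bilinear.FDERIV[OF mv_bb dd_has[OF assms(1)] dd_has[OF assms(2)]])
  from dd_eq[OF this] show ?thesis by simp
qed

lemma diff_loc: assumes "open U" "p \<in> U" "\<And>q. q \<in> U \<Longrightarrow> f q = g q" "g differentiable (at p)"
  shows "f differentiable (at p)"
  using assms has_derivative_transform_within_open unfolding differentiable_def by metis

lemma gm_add_l: "gmet G p (a + b) c = gmet G p a c + gmet G p b c" by (simp add: gmet_def inner_add_left)
lemma gm_add_r: "gmet G p c (a + b) = gmet G p c a + gmet G p c b" by (simp add: gmet_def inner_add_right matrix_vector_right_distrib)
lemma gm_diff_l: "gmet G p (a - b) c = gmet G p a c - gmet G p b c" by (simp add: gmet_def inner_diff_left)
lemma gm_diff_r: "gmet G p c (a - b) = gmet G p c a - gmet G p c b" by (simp add: gmet_def inner_diff_right matrix_vector_mult_diff_distrib)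
lemma gm_neg_l: "gmet G p (- a) c = - gmet G p a c" by (simp add: gmet_def)
lemma gm_sc_r0: "gmet G p c (r *\<^sub>R a) = r * gmet G p c a" by (simp add: gmet_def matrix_vector_mult_scaleR)
lemma gm_neg_r: "gmet G p c (- a) = - gmet G p c a" by (metis gm_sc_r0 scaleR_minus1_left mult_minus1)
lemma gm_sc_l: "gmet G p (r *\<^sub>R a) c = r * gmet G p a c" by (simp add: gmet_def)
lemma gm_sc_r: "gmet G p c (r *\<^sub>R a) = r * gmet G p c a" by (simp add: gmet_def matrix_vector_mult_scaleR)
lemma gm_0_l: "gmet G p 0 c = 0" by (simp add: gmet_def)
lemma gm_0_r: "gmet G p c 0 = 0" by (simp add: gmet_def)
lemmas gm_simps = gm_add_l gm_add_r gm_diff_l gm_diff_r gm_neg_l gm_neg_r gm_sc_l gm_sc_r gm_0_l gm_0_r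

lemma lin_expand: "linear (f :: real^'n::finite \<Rightarrow> real) \<Longrightarrow> (\<Sum>k\<in>UNIV. z$k * f (axis k 1)) = f z"
proof -
  assume l: "linear f"
  have "f z = f (\<Sum>k\<in>UNIV. z$k *\<^sub>R axis k 1)"
    using basis_expansion[of z] by (simp add: scalar_mult_eq_scaleR)
  also have "\<dots> = (\<Sum>k\<in>UNIV. z$k * f (axis k 1))"
    by (simp add: linear_sum[OF l] linear_scale[OF l])
  finally show ?thesis by simp
qed


lemma two_sc: "(2 * a) *\<^sub>R (x::'a::real_vector) = a *\<^sub>R x + a *\<^sub>R x"
  by (metis scaleR_2 scaleR_scaleR)
lemma gen1: "(D::'a::real_vector) = - a *\<^sub>R x - u + (2 * a) *\<^sub>R x \<Longrightarrow> D = a *\<^sub>R x - u"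
  unfolding two_sc by (simp add: algebra_simps)
lemma gen2: "(A::'a::ab_group_add) + B = 0 \<Longrightarrow> B - C = w \<Longrightarrow> A + C = - w"
  by (simp add: algebra_simps eq_neg_iff_add_eq_0)
lemma gen3: "(u::'a::ab_group_add) - a + (- u + a) = 0" by simp

lemma gen4: "(-(c *\<^sub>R (PdB + ((SAB::'a::real_vector) + PchAB - chAPB))) - c *\<^sub>R chAPB) - (-(c *\<^sub>R (PdA + (SBA + PchAB - chBPA))) - c *\<^sub>R chBPA) - (-(c *\<^sub>R (PdB - PdA)))
   = c *\<^sub>R (SBA - SAB)"
  by (auto simp: algebra_simps)
lemma gen5: "(- g *\<^sub>R x - a *\<^sub>R B + (2 * b * a) *\<^sub>R x) - (- g *\<^sub>R x - b *\<^sub>R A + (2 * a * b) *\<^sub>R x)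
   = b *\<^sub>R A - a *\<^sub>R (B::'a::real_vector)"
  by (simp add: algebra_simps)

definition Qv :: "(real^'n::finite \<Rightarrow> real) \<Rightarrow> real \<Rightarrow> real \<Rightarrow> nat \<Rightarrow> (real^'n \<Rightarrow> real^'n^'n) \<Rightarrow> (real^'n \<Rightarrow> real^'n) \<Rightarrow> (real^'n \<Rightarrow> real^'n) \<Rightarrow> real^'n \<Rightarrow> real^'n \<Rightarrow> real^'n" where
  "Qv k lam mu n Phi xi eta p x = (k p - mu) *\<^sub>R (Phi p *v x) - lam *\<^sub>R x + ((2 * real n + lam) * (eta p \<bullet> x)) *\<^sub>R xi p"

lemma gen6: "(k - mu) *\<^sub>R (0::'a::real_vector) - lam *\<^sub>R x + ((2 * m + lam) * 1) *\<^sub>R x = (2 * m) *\<^sub>R x"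
  by (simp add: algebra_simps)

lemma gen7: "(2 * m + lam) *\<^sub>R (x::'a::real_vector) - lam *\<^sub>R x = (2 * m) *\<^sub>R x"
  by (simp add: algebra_simps)

context
  fixes U :: "(real^'n::finite) set" and n :: nat
    and Phi G :: "real^'n \<Rightarrow> real^'n^'n" and xi eta :: "real^'n \<Rightarrow> real^'n"
  assumes SL: "sasaki_like U n Phi xi eta G"
begin
lemma AC: "acbm U n Phi xi eta G" using SL unfolding sasaki_like_def by (rule conjunct1)
lemma AC2: "open U \<and> CARD('n) = 2 * n + 1 \<and> n \<ge> 1 \<and>
     cinf_on U Phi \<and> cinf_on U xi \<and> cinf_on U eta \<and> cinf_on U G \<and>
     metric_sig U n G \<and>
     (\<forall>p\<in>U. Phi p *v xi p = 0 \<and> eta p \<bullet> xi p = 1 \<and>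
        (\<forall>x. Phi p *v (Phi p *v x) = - x + (eta p \<bullet> x) *\<^sub>R xi p) \<and>
        (\<forall>x. eta p \<bullet> (Phi p *v x) = 0) \<and>
        (\<forall>x y. gmet G p (Phi p *v x) (Phi p *v y) = - gmet G p x y + (eta p \<bullet> x) * (eta p \<bullet> y)))"
  using AC unfolding acbm_def by assumption
lemma openU: "open U" using AC2 by simp
lemma PW: "p \<in> U \<Longrightarrow> Phi p *v xi p = 0 \<and> eta p \<bullet> xi p = 1 \<and>
        (\<forall>x. Phi p *v (Phi p *v x) = - x + (eta p \<bullet> x) *\<^sub>R xi p) \<and>
        (\<forall>x. eta p \<bullet> (Phi p *v x) = 0) \<and>
        (\<forall>x y. gmet G p (Phi p *v x) (Phi p *v y) = - gmet G p x y + (eta p \<bullet> x) * (eta p \<bullet> y))"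
  using AC2 by (elim conjE) (erule bspec)
lemma cardn: "CARD('n) = 2 * n + 1" "n \<ge> 1" using AC2 by simp_all
lemma dPhi: "p \<in> U \<Longrightarrow> Phi differentiable (at p)" using AC2 cinf_diff by (elim conjE) 
lemma dxi: "p \<in> U \<Longrightarrow> xi differentiable (at p)" using AC2 cinf_diff by (elim conjE) 
lemma deta: "p \<in> U \<Longrightarrow> eta differentiable (at p)" using AC2 cinf_diff by (elim conjE) 
lemma dG: "p \<in> U \<Longrightarrow> G differentiable (at p)" using AC2 cinf_diff by (elim conjE) 
lemma sxi: "smooth_vf U xi" using AC2 unfolding smooth_vf_def by (elim conjE) 
lemma Phixi: "p \<in> U \<Longrightarrow> Phi p *v xi p = 0" using PW by blast
lemma etaxi: "p \<in> U \<Longrightarrow> eta p \<bullet> xi p = 1" using PW by blast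
lemma Phi2: "p \<in> U \<Longrightarrow> Phi p *v (Phi p *v x) = - x + (eta p \<bullet> x) *\<^sub>R xi p" using PW by blast
lemma etaPhi: "p \<in> U \<Longrightarrow> eta p \<bullet> (Phi p *v x) = 0" using PW by blast
lemma gPhi: "p \<in> U \<Longrightarrow> gmet G p (Phi p *v x) (Phi p *v y) = - gmet G p x y + (eta p \<bullet> x) * (eta p \<bullet> y)"
  using PW by blast
lemma MS: "metric_sig U n G" using AC2 by simp
lemma Gsym: "p \<in> U \<Longrightarrow> transpose (G p) = G p" using MS unfolding metric_sig_def by (elim ballE conjE; simp)
lemma Ginv: "p \<in> U \<Longrightarrow> invertible (G p)" using MS unfolding metric_sig_def by (elim ballE conjE; simp)
lemma gsym: "p \<in> U \<Longrightarrow> gmet G p u w = gmet G p w u"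
  unfolding gmet_def by (metis Gsym dot_lmul_matrix inner_commute transpose_matrix_vector)

lemma gxi: "p \<in> U \<Longrightarrow> gmet G p u (xi p) = eta p \<bullet> u"
  using gPhi[of p u "xi p"] Phixi[of p] etaxi[of p] by (simp add: gm_simps)

lemma gxi': "p \<in> U \<Longrightarrow> gmet G p (xi p) u = eta p \<bullet> u"
  using gxi gsym by metis

lemma phisym: "p \<in> U \<Longrightarrow> gmet G p (Phi p *v x) y = gmet G p x (Phi p *v y)"
proof -
  assume p: "p \<in> U"
  have "gmet G p (Phi p *v x) (Phi p *v (Phi p *v y)) = - gmet G p x (Phi p *v y)"
    using gPhi[OF p, of x "Phi p *v y"] etaPhi[OF p] by simp
  moreover have "gmet G p (Phi p *v x) (Phi p *v (Phi p *v y)) = - gmet G p (Phi p *v x) y"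
    using Phi2[OF p] gxi[OF p] etaPhi[OF p] by (simp add: gm_simps)
  ultimately show ?thesis by simp
qed

lemma kerPhi: "p \<in> U \<Longrightarrow> Phi p *v v = 0 \<Longrightarrow> v = (eta p \<bullet> v) *\<^sub>R xi p"
  using Phi2[of p v] by simp

lemma dGsym: assumes p: "p \<in> U" shows "transpose (dd G p u) = dd G p u"
proof -
  have bl: "bounded_linear (transpose :: real^'n^'n \<Rightarrow> real^'n^'n)"
    by (simp add: linear_conv_bounded_linear[symmetric] linear_iff transpose_def vec_eq_iff)
  have "((\<lambda>q. transpose (G q)) has_derivative (\<lambda>h. transpose (dd G p h))) (at p)"
    using bounded_linear.has_derivative[OF bl dd_has[OF dG[OF p]]] .
  then have "dd (\<lambda>q. transpose (G q)) p = (\<lambda>h. transpose (dd G p h))" by (rule dd_eq)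
  moreover have "dd (\<lambda>q. transpose (G q)) p = dd G p"
    using dd_loc[OF openU p] Gsym by metis
  ultimately show ?thesis by metis
qed

lemma Msym: "transpose M = M \<Longrightarrow> (a::real^'n) \<bullet> (M *v b) = b \<bullet> (M *v a)"
  by (metis dot_lmul_matrix inner_commute transpose_matrix_vector)

definition "Lw p u w = (\<chi> k. (1/2) *
      (w \<bullet> (dd G p u *v axis k 1) + u \<bullet> (dd G p w *v axis k 1)
       - u \<bullet> (dd G p (axis k 1) *v w)))"

lemma chr_L: "chr G p u w = matrix_inv (G p) *v Lw p u w"
  unfolding chr_def Lw_def by simp

lemma chr_sym: assumes p: "p \<in> U" shows "chr G p u w = chr G p w u"
proof -
  have "Lw p u w = Lw p w u"
    unfolding Lw_def vec_eq_iff using Msym[OF dGsym[OF p]] by (simp add: algebra_simps)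
  then show ?thesis by (simp add: chr_L)
qed

lemma dGlin: "p \<in> U \<Longrightarrow> linear (dd G p)" using dd_linear dG by blast

lemma Lw_dot: assumes p: "p \<in> U"
  shows "Lw p u w \<bullet> z = (1/2) * (w \<bullet> (dd G p u *v z) + u \<bullet> (dd G p w *v z) - u \<bullet> (dd G p z *v w))"
proof -
  have l1: "linear (\<lambda>c. w \<bullet> (dd G p u *v c))"
    by (intro linearI) (simp_all add: matrix_vector_right_distrib inner_add_right matrix_vector_mult_scaleR)
  have l2: "linear (\<lambda>c. u \<bullet> (dd G p w *v c))"
    by (intro linearI) (simp_all add: matrix_vector_right_distrib inner_add_right matrix_vector_mult_scaleR)
  have l3: "linear (\<lambda>c. u \<bullet> (dd G p c *v w))"
    using dGlin[OF p]
    by (intro linearI) (simp_all add: linear_add linear_scale matrix_vector_mult_add_rdistrib inner_add_right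
        scaleR_matrix_vector_assoc[symmetric])
  have "Lw p u w \<bullet> z = (\<Sum>k\<in>UNIV. z$k * ((1/2) * (w \<bullet> (dd G p u *v axis k 1) + u \<bullet> (dd G p w *v axis k 1)
       - u \<bullet> (dd G p (axis k 1) *v w))))"
    unfolding Lw_def inner_vec_def by (simp add: mult.commute)
  also have "\<dots> = (1/2) * ((\<Sum>k\<in>UNIV. z$k * (w \<bullet> (dd G p u *v axis k 1))) + (\<Sum>k\<in>UNIV. z$k * (u \<bullet> (dd G p w *v axis k 1)))
       - (\<Sum>k\<in>UNIV. z$k * (u \<bullet> (dd G p (axis k 1) *v w))))"
    by (simp add: sum_distrib_left sum.distrib sum_subtractf algebra_simps)
  also have "\<dots> = (1/2) * (w \<bullet> (dd G p u *v z) + u \<bullet> (dd G p w *v z) - u \<bullet> (dd G p z *v w))"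
    using lin_expand[OF l1] lin_expand[OF l2] lin_expand[OF l3] by simp
  finally show ?thesis .
qed

lemma g_chr: assumes p: "p \<in> U"
  shows "gmet G p (chr G p u w) z = (1/2) * (w \<bullet> (dd G p u *v z) + u \<bullet> (dd G p w *v z) - u \<bullet> (dd G p z *v w))"
proof -
  have "gmet G p (chr G p u w) z = gmet G p z (chr G p u w)" using gsym[OF p] by metis
  also have "\<dots> = z \<bullet> Lw p u w"
    unfolding gmet_def chr_L matrix_vector_mul_assoc using minv[OF Ginv[OF p]] by simp
  finally show ?thesis using Lw_dot[OF p] by (simp add: inner_commute)
qed

lemma g_compat: assumes p: "p \<in> U"
  shows "gmet G p (chr G p u a) b + gmet G p a (chr G p u b) = a \<bullet> (dd G p u *v b)"
  using g_chr[OF p, of u a b] g_chr[OF p, of u b a] gsym[OF p, of a "chr G p u b"]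
    Msym[OF dGsym[OF p], of a u b]
  by (simp add: algebra_simps)

lemma chr_lin: assumes p: "p \<in> U" shows "linear (chr G p u)"
proof -
  have "linear (Lw p u)"
    unfolding Lw_def using dGlin[OF p]
    by (intro linearI) (simp_all add: vec_eq_iff linear_add linear_scale matrix_vector_mult_add_rdistrib inner_add_right
        inner_add_left matrix_vector_right_distrib scaleR_matrix_vector_assoc[symmetric] matrix_vector_mult_scaleR algebra_simps)
  then show ?thesis unfolding chr_L
    by (intro linearI) (simp_all add: linear_add linear_scale matrix_vector_right_distrib matrix_vector_mult_scaleR)
qed

lemma SAS: "smooth_vf U X \<Longrightarrow> smooth_vf U Y \<Longrightarrow> p \<in> U \<Longrightarrow>
        cov G X (\<lambda>q. Phi q *v Y q) p - Phi p *v cov G X Y p =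
          - gmet G p (X p) (Y p) *\<^sub>R xi p - (eta p \<bullet> Y p) *\<^sub>R X p
          + (2 * (eta p \<bullet> X p) * (eta p \<bullet> Y p)) *\<^sub>R xi p"
proof -
  assume a: "smooth_vf U X" "smooth_vf U Y" "p \<in> U"
  have "\<forall>X Y. smooth_vf U X \<longrightarrow> smooth_vf U Y \<longrightarrow> (\<forall>p\<in>U.
        cov G X (\<lambda>q. Phi q *v Y q) p - Phi p *v cov G X Y p =
          - gmet G p (X p) (Y p) *\<^sub>R xi p - (eta p \<bullet> Y p) *\<^sub>R X p
          + (2 * (eta p \<bullet> X p) * (eta p \<bullet> Y p)) *\<^sub>R xi p)"
    using SL unfolding sasaki_like_def by (rule conjunct2)
  then show ?thesis using a by blast
qed

lemma sas: assumes p: "p \<in> U"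
  shows "dd Phi p u *v y + chr G p u (Phi p *v y) - Phi p *v chr G p u y =
     - gmet G p u y *\<^sub>R xi p - (eta p \<bullet> y) *\<^sub>R u + (2 * (eta p \<bullet> u) * (eta p \<bullet> y)) *\<^sub>R xi p"
proof -
  have h: "cov G (\<lambda>_. u) (\<lambda>q. Phi q *v y) p - Phi p *v cov G (\<lambda>_. u) (\<lambda>_. y) p =
     - gmet G p u y *\<^sub>R xi p - (eta p \<bullet> y) *\<^sub>R u + (2 * (eta p \<bullet> u) * (eta p \<bullet> y)) *\<^sub>R xi p"
    using SAS[OF const_smooth const_smooth p] by simp
  have "dd (\<lambda>q. Phi q *v (\<lambda>_. y) q) p u = dd Phi p u *v y"
    using dd_mv[OF dPhi[OF p] differentiable_const, of y u] by (simp add: dd_const)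
  then show ?thesis using h unfolding cov_def by (simp add: dd_const)
qed

lemma chr0: "p \<in> U \<Longrightarrow> chr G p u 0 = 0" using chr_lin linear_0 by blast

lemma nabla_xi: assumes p: "p \<in> U" shows "dd xi p u + chr G p u (xi p) = - (Phi p *v u)"
proof -
  define c where "c = dd xi p u + chr G p u (xi p)"
  have a0: "dd Phi p u *v xi p - Phi p *v chr G p u (xi p) = - (eta p \<bullet> u) *\<^sub>R xi p - u + (2 * (eta p \<bullet> u)) *\<^sub>R xi p"
    using sas[OF p, of u "xi p"] unfolding Phixi[OF p] chr0[OF p] etaxi[OF p] gxi[OF p] by simp
  have a: "dd Phi p u *v xi p - Phi p *v chr G p u (xi p) = (eta p \<bullet> u) *\<^sub>R xi p - u"
    using gen1[OF a0] .
  have "dd (\<lambda>q. Phi q *v xi q) p = dd (\<lambda>_. 0) p"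
    by (rule dd_loc[OF openU p]) (simp add: Phixi)
  then have e: "Phi p *v dd xi p u + dd Phi p u *v xi p = 0"
    using dd_mv[OF dPhi[OF p] dxi[OF p], of u] by (simp add: dd_const)
  have c1: "Phi p *v c = u - (eta p \<bullet> u) *\<^sub>R xi p"
    using gen2[OF e a] unfolding c_def matrix_vector_right_distrib by simp
  have "Phi p *v (c + Phi p *v u) = 0"
    unfolding matrix_vector_right_distrib c1 Phi2[OF p, of u] by (rule gen3)
  then have c2: "c + Phi p *v u = (eta p \<bullet> (c + Phi p *v u)) *\<^sub>R xi p" using kerPhi[OF p] by blast
  have "dd (\<lambda>q. gmet G q (xi q) (xi q)) p = dd (\<lambda>_. 1) p"
    by (rule dd_loc[OF openU p]) (simp add: gxi etaxi)
  then have e1: "dd xi p u \<bullet> (G p *v xi p) + xi p \<bullet> (dd G p u *v xi p) + xi p \<bullet> (G p *v dd xi p u) = 0"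
    using dd_gm[OF dG[OF p] dxi[OF p] dxi[OF p], of u] by (simp add: dd_const)
  have e2: "2 * gmet G p (chr G p u (xi p)) (xi p) = xi p \<bullet> (dd G p u *v xi p)"
    using g_compat[OF p, of u "xi p" "xi p"] gsym[OF p, of "xi p" "chr G p u (xi p)"] by simp
  have e3: "xi p \<bullet> (G p *v dd xi p u) = dd xi p u \<bullet> (G p *v xi p)"
    using gsym[OF p, of "xi p" "dd xi p u"] unfolding gmet_def .
  have "gmet G p c (xi p) = 0"
    using e1 e2 e3 unfolding c_def gm_add_l by (simp add: gmet_def)
  then have "eta p \<bullet> c = 0" using gxi[OF p] by simp
  then have "c + Phi p *v u = 0" using c2 etaPhi[OF p] by (simp add: inner_add_right)
  then show ?thesis unfolding c_def by (simp add: eq_neg_iff_add_eq_0)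
qed

lemma chr_sc: "p \<in> U \<Longrightarrow> chr G p u (r *\<^sub>R w) = r *\<^sub>R chr G p u w"
  using chr_lin linear_scale by blast
lemma chr_neg: "p \<in> U \<Longrightarrow> chr G p u (- w) = - chr G p u w"
  using chr_lin linear_neg by blast

lemma nabla_Z: assumes q: "q \<in> U" and Z: "\<And>q. q \<in> U \<Longrightarrow> Z q = c *\<^sub>R xi q"
  shows "dd Z q v + chr G q v (Z q) = - (c *\<^sub>R (Phi q *v v))"
proof -
  have "dd Z q = dd (\<lambda>r. c *\<^sub>R xi r) q" by (rule dd_loc[OF openU q]) (simp add: Z)
  then have "dd Z q v = c *\<^sub>R dd xi q v"
    using dd_sc[of "\<lambda>_. c" q xi v] dxi[OF q] by (simp add: dd_const)
  then have "dd Z q v + chr G q v (Z q) = c *\<^sub>R (dd xi q v + chr G q v (xi q))"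
    by (simp add: Z[OF q] chr_sc[OF q] scaleR_right_distrib)
  then show ?thesis using nabla_xi[OF q] by simp
qed

lemma curv_xi: assumes p: "p \<in> U" and dA: "A differentiable (at p)" and dB: "B differentiable (at p)"
  and Z: "\<And>q. q \<in> U \<Longrightarrow> Z q = c *\<^sub>R xi q"
  shows "curv G A B Z p = c *\<^sub>R ((eta p \<bullet> B p) *\<^sub>R A p - (eta p \<bullet> A p) *\<^sub>R B p)"
proof -
  have cv: "\<And>X q. q \<in> U \<Longrightarrow> cov G X Z q = - (c *\<^sub>R (Phi q *v X q))"
    unfolding cov_def using nabla_Z[OF _ Z] by blast
  have X1: "cov G A (cov G B Z) p = -(c *\<^sub>R (Phi p *v dd B p (A p) + dd Phi p (A p) *v B p)) - c *\<^sub>R chr G p (A p) (Phi p *v B p)"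
  proof -
    have "dd (cov G B Z) p = dd (\<lambda>q. - (c *\<^sub>R (Phi q *v B q))) p" by (rule dd_loc[OF openU p]) (simp add: cv)
    then show ?thesis unfolding cov_def[of G A] using dd_neg_sc_mv[OF dPhi[OF p] dB, of c "A p"]
      by (simp add: cv[OF p] chr_sc[OF p] chr_neg[OF p])
  qed
  have X2: "cov G B (cov G A Z) p = -(c *\<^sub>R (Phi p *v dd A p (B p) + dd Phi p (B p) *v A p)) - c *\<^sub>R chr G p (B p) (Phi p *v A p)"
  proof -
    have "dd (cov G A Z) p = dd (\<lambda>q. - (c *\<^sub>R (Phi q *v A q))) p" by (rule dd_loc[OF openU p]) (simp add: cv)
    then show ?thesis unfolding cov_def[of G B] using dd_neg_sc_mv[OF dPhi[OF p] dA, of c "B p"]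
      by (simp add: cv[OF p] chr_sc[OF p] chr_neg[OF p])
  qed
  have X3: "cov G (bracket A B) Z p = - (c *\<^sub>R (Phi p *v dd B p (A p) - Phi p *v dd A p (B p)))"
    using cv[OF p, of "bracket A B"] unfolding bracket_def by (simp add: matrix_vector_mult_diff_distrib)
  have s1: "(- gmet G p (A p) (B p) *\<^sub>R xi p - (eta p \<bullet> B p) *\<^sub>R A p + (2 * (eta p \<bullet> A p) * (eta p \<bullet> B p)) *\<^sub>R xi p)
     + Phi p *v chr G p (A p) (B p) - chr G p (A p) (Phi p *v B p) = dd Phi p (A p) *v B p"
    using sas[OF p, of "A p" "B p"] by (simp add: algebra_simps)
  have s2: "(- gmet G p (A p) (B p) *\<^sub>R xi p - (eta p \<bullet> A p) *\<^sub>R B p + (2 * (eta p \<bullet> B p) * (eta p \<bullet> A p)) *\<^sub>R xi p)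
     + Phi p *v chr G p (A p) (B p) - chr G p (B p) (Phi p *v A p) = dd Phi p (B p) *v A p"
    using sas[OF p, of "B p" "A p"] chr_sym[OF p, of "A p" "B p"] gsym[OF p, of "A p" "B p"] by (simp add: algebra_simps)
  have "curv G A B Z p = c *\<^sub>R ((- gmet G p (A p) (B p) *\<^sub>R xi p - (eta p \<bullet> A p) *\<^sub>R B p + (2 * (eta p \<bullet> B p) * (eta p \<bullet> A p)) *\<^sub>R xi p)
     - (- gmet G p (A p) (B p) *\<^sub>R xi p - (eta p \<bullet> B p) *\<^sub>R A p + (2 * (eta p \<bullet> A p) * (eta p \<bullet> B p)) *\<^sub>R xi p))"
    unfolding curv_def X1 X2 X3 s1[symmetric] s2[symmetric] by (rule gen4)
  also have "\<dots> = c *\<^sub>R ((eta p \<bullet> B p) *\<^sub>R A p - (eta p \<bullet> A p) *\<^sub>R B p)"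
    by (simp only: gen5)
  finally show ?thesis .
qed

lemma ricci_xi: assumes p: "p \<in> U" and dY: "Y differentiable (at p)"
  shows "ricci G Y xi p = 2 * real n * (eta p \<bullet> Y p)"
proof -
  have "\<And>i. curv G (\<lambda>_. axis i 1) Y xi p = (eta p \<bullet> Y p) *\<^sub>R axis i 1 - (eta p \<bullet> axis i 1) *\<^sub>R Y p"
    using curv_xi[OF p differentiable_const dY, of xi 1] by simp
  then have "ricci G Y xi p = (\<Sum>i\<in>UNIV. (eta p \<bullet> Y p) - eta p $ i * Y p $ i)"
    unfolding ricci_def by (simp add: inner_axis)
  also have "\<dots> = real CARD('n) * (eta p \<bullet> Y p) - (eta p \<bullet> Y p)"
    by (simp add: sum_subtractf inner_vec_def)
  finally show ?thesis using cardn by (simp add: algebra_simps)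
qed

lemma exPhi: assumes p: "p \<in> U" shows "\<exists>u. Phi p *v u \<noteq> 0"
proof (rule ccontr)
  assume "\<not> (\<exists>u. Phi p *v u \<noteq> 0)"
  then have z: "\<And>u. Phi p *v u = 0" by blast
  have ax: "axis i 1 = (eta p $ i) *\<^sub>R xi p" for i
    using kerPhi[OF p z[of "axis i 1"]] by (simp add: inner_axis)
  have "CARD('n) \<ge> 2" using cardn by simp
  have "\<not> (\<forall>i j::'n. i = j)"
  proof
    assume a: "\<forall>i j::'n. i = j"
    then have "(UNIV::'n set) = {undefined}" by auto
    then have "CARD('n) = card {undefined::'n}" by (rule arg_cong)
    then have "CARD('n) = 1" by simp
    with \<open>CARD('n) \<ge> 2\<close> show False by simp
  qed
  then obtain i j :: 'n where ij: "i \<noteq> j" by blast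
  have "axis i 1 $ i = (1::real)" by simp
  then have i1: "eta p $ i * xi p $ i = 1" using arg_cong[where f="\<lambda>v. v $ i", OF ax[of i]] by simp
  have "axis i 1 $ j = (0::real)" using ij by (simp add: axis_def)
  then have "eta p $ i * xi p $ j = 0" using arg_cong[where f="\<lambda>v. v $ j", OF ax[of i]] by simp
  then have xj: "xi p $ j = 0" using i1 by auto
  have "axis j 1 $ j = (1::real)" by simp
  then have "eta p $ j * xi p $ j = 1" using arg_cong[where f="\<lambda>v. v $ j", OF ax[of j]] by simp
  then show False using xj by simp
qed

context
  fixes k :: "real^'n \<Rightarrow> real" and lam mu nu :: real
  assumes kd: "k differentiable_on U"
    and RS: "ricci_like_soliton U Phi xi eta G (\<lambda>p. k p *\<^sub>R xi p) lam mu nu"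
begin

lemma dk: "p \<in> U \<Longrightarrow> k differentiable (at p)"
  using kd differentiable_on_eq_differentiable_at openU by blast

lemma dv: "p \<in> U \<Longrightarrow> (\<lambda>q. k q *\<^sub>R xi q) differentiable (at p)"
  using dk dxi by (simp add: differentiable_scaleR)

lemma RS': "smooth_vf U X \<Longrightarrow> smooth_vf U Y \<Longrightarrow> p \<in> U \<Longrightarrow>
        (1/2) * lie_g G (\<lambda>p. k p *\<^sub>R xi p) X Y p + ricci G X Y p + lam * gmet G p (X p) (Y p)
        + mu * gtil G Phi eta p (X p) (Y p) + nu * (eta p \<bullet> X p) * (eta p \<bullet> Y p) = 0"
  using RS unfolding ricci_like_soliton_def by blast

lemma Dlem: assumes p: "p \<in> U"
  shows "dd (\<lambda>q. k q *\<^sub>R xi q) p a + chr G p a (k p *\<^sub>R xi p) = dd k p a *\<^sub>R xi p - k p *\<^sub>R (Phi p *v a)"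
proof -
  have "dd (\<lambda>q. k q *\<^sub>R xi q) p a + chr G p a (k p *\<^sub>R xi p) = dd k p a *\<^sub>R xi p + k p *\<^sub>R (dd xi p a + chr G p a (xi p))"
    using dd_sc[OF dk[OF p] dxi[OF p], of a] chr_sc[OF p] by (simp add: scaleR_right_distrib)
  then show ?thesis using nabla_xi[OF p, of a] by simp
qed

lemma lie: assumes p: "p \<in> U" and dX: "X differentiable (at p)" and dY: "Y differentiable (at p)"
  shows "lie_g G (\<lambda>q. k q *\<^sub>R xi q) X Y p =
     gmet G p (dd k p (X p) *\<^sub>R xi p - k p *\<^sub>R (Phi p *v X p)) (Y p)
   + gmet G p (X p) (dd k p (Y p) *\<^sub>R xi p - k p *\<^sub>R (Phi p *v Y p))"
proof -
  define v where "v = (\<lambda>q. k q *\<^sub>R xi q)"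
  have h1: "dd (\<lambda>q. gmet G q (X q) (Y q)) p (v p) = gmet G p (dd X p (v p)) (Y p)
      + (gmet G p (chr G p (X p) (v p)) (Y p) + gmet G p (X p) (chr G p (Y p) (v p))) + gmet G p (X p) (dd Y p (v p))"
    using dd_gm[OF dG[OF p] dX dY, of "v p"] g_compat[OF p, of "v p" "X p" "Y p"]
      chr_sym[OF p, of "v p" "X p"] chr_sym[OF p, of "v p" "Y p"] unfolding gmet_def by simp
  have "lie_g G v X Y p = gmet G p (dd v p (X p) + chr G p (X p) (v p)) (Y p)
      + gmet G p (X p) (dd v p (Y p) + chr G p (Y p) (v p))"
    unfolding lie_g_def h1 bracket_def gm_simps by simp
  then show ?thesis unfolding v_def using Dlem[OF p] by simp
qed


lemma dk_eta: assumes p: "p \<in> U" shows "dd k p y = - (2 * real n + lam + mu + nu) * (eta p \<bullet> y)"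
proof -
  have E: "(1/2) * (dd k p y' + dd k p (xi p) * (eta p \<bullet> y')) + (2 * real n + lam + mu + nu) * (eta p \<bullet> y') = 0" for y'
  proof -
    have "(1/2) * lie_g G (\<lambda>p. k p *\<^sub>R xi p) (\<lambda>_. y') xi p + ricci G (\<lambda>_. y') xi p + lam * gmet G p y' (xi p)
        + mu * gtil G Phi eta p y' (xi p) + nu * (eta p \<bullet> y') * (eta p \<bullet> xi p) = 0"
      using RS'[OF const_smooth sxi p] by simp
    moreover have "lie_g G (\<lambda>p. k p *\<^sub>R xi p) (\<lambda>_. y') xi p = dd k p y' + dd k p (xi p) * (eta p \<bullet> y')"
      using lie[OF p differentiable_const dxi[OF p], of y']
      by (simp add: gm_simps gxi[OF p] Phixi[OF p] etaPhi[OF p] etaxi[OF p] gxi'[OF p])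
    moreover have "ricci G (\<lambda>_. y') xi p = 2 * real n * (eta p \<bullet> y')"
      using ricci_xi[OF p differentiable_const] by simp
    moreover have "gtil G Phi eta p y' (xi p) = eta p \<bullet> y'"
      unfolding gtil_def by (simp add: Phixi[OF p] etaxi[OF p] gm_simps)
    ultimately show ?thesis using gxi[OF p, of y'] etaxi[OF p] by (simp add: algebra_simps)
  qed
  have D: "dd k p (xi p) = - (2 * real n + lam + mu + nu)" using E[of "xi p"] etaxi[OF p] by simp
  have "(1/2) * (dd k p y + - (2 * real n + lam + mu + nu) * (eta p \<bullet> y)) + (2 * real n + lam + mu + nu) * (eta p \<bullet> y) = 0"
    using E[of y, unfolded D] .
  then show ?thesis by (simp add: algebra_simps)
qed

lemma ricci_Q: assumes X: "smooth_vf U X" and Y: "smooth_vf U Y" and p: "p \<in> U"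
  shows "ricci G X Y p = gmet G p (Qv k lam mu n Phi xi eta p (X p)) (Y p)"
proof -
  have dX: "X differentiable (at p)" using X p cinf_diff smooth_vf_def by blast
  have dY: "Y differentiable (at p)" using Y p cinf_diff smooth_vf_def by blast
  define K where "K = 2 * real n + lam + mu + nu"
  have L: "lie_g G (\<lambda>p. k p *\<^sub>R xi p) X Y p = - 2 * K * (eta p \<bullet> X p) * (eta p \<bullet> Y p) - 2 * k p * gmet G p (Phi p *v X p) (Y p)"
    using lie[OF p dX dY] dk_eta[OF p] phisym[OF p, of "X p" "Y p"]
    by (simp add: gm_simps gxi[OF p] gxi'[OF p] K_def algebra_simps)
  have T: "gtil G Phi eta p (X p) (Y p) = gmet G p (Phi p *v X p) (Y p) + (eta p \<bullet> X p) * (eta p \<bullet> Y p)"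
    unfolding gtil_def using phisym[OF p, of "X p" "Y p"] by simp
  have Qg: "gmet G p (Qv k lam mu n Phi xi eta p (X p)) (Y p) = (k p - mu) * gmet G p (Phi p *v X p) (Y p)
     - lam * gmet G p (X p) (Y p) + (2 * real n + lam) * (eta p \<bullet> X p) * (eta p \<bullet> Y p)"
    unfolding Qv_def by (simp add: gm_simps gxi'[OF p])
  show ?thesis using RS'[OF X Y p] unfolding L T Qg by (simp add: K_def algebra_simps)
qed

lemma ricci_op_Q: assumes X: "smooth_vf U X" and p: "p \<in> U"
  shows "ricci_op G X p = Qv k lam mu n Phi xi eta p (X p)"
proof -
  define a where "a = Qv k lam mu n Phi xi eta p (X p)"
  have "(\<chi> j. ricci G X (\<lambda>_. axis j 1) p) = G p *v a"
  proof (subst vec_eq_iff, rule allI)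
    fix j
    have "ricci G X (\<lambda>_. axis j 1) p = gmet G p a (axis j 1)"
      using ricci_Q[OF X const_smooth p] unfolding a_def by simp
    also have "\<dots> = gmet G p (axis j 1) a" using gsym[OF p] by metis
    also have "\<dots> = (G p *v a) $ j" unfolding gmet_def by (simp add: inner_axis')
    finally show "(\<chi> j. ricci G X (\<lambda>_. axis j 1) p) $ j = (G p *v a) $ j" by simp
  qed
  then show ?thesis unfolding ricci_op_def a_def[symmetric]
    using minv[OF Ginv[OF p]] by (simp add: matrix_vector_mul_assoc)
qed

lemma Qxi: "q \<in> U \<Longrightarrow> ricci_op G xi q = (2 * real n) *\<^sub>R xi q"
  using ricci_op_Q[OF sxi, of q] unfolding Qv_def by (simp add: Phixi etaxi gen7)

lemma Qsym: assumes p: "p \<in> U"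
  shows "gmet G p (Qv k lam mu n Phi xi eta p y) w = gmet G p y (Qv k lam mu n Phi xi eta p w)"
  unfolding Qv_def using phisym[OF p, of y w]
  by (simp add: gm_simps gxi[OF p] gxi'[OF p] algebra_simps)
end

end

theorem mainTheorem11:
  fixes U :: "(real^'n::finite) set" and n :: nat
    and Phi G :: "real^'n \<Rightarrow> real^'n^'n" and xi eta :: "real^'n \<Rightarrow> real^'n"
  assumes "U \<noteq> {}"
    and "sasaki_like U n Phi xi eta G"
    and "QR_zero U G"
  shows "\<not> (\<exists>(k :: real^'n \<Rightarrow> real) lam mu nu. k differentiable_on U \<and>
            ricci_like_soliton U Phi xi eta G (\<lambda>p. k p *\<^sub>R xi p) lam mu nu)"
proof
  assume "\<exists>(k :: real^'n \<Rightarrow> real) lam mu nu. k differentiable_on U \<and>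
            ricci_like_soliton U Phi xi eta G (\<lambda>p. k p *\<^sub>R xi p) lam mu nu"
  then obtain k :: "real^'n \<Rightarrow> real" and lam mu nu where kd: "k differentiable_on U"
    and RS: "ricci_like_soliton U Phi xi eta G (\<lambda>p. k p *\<^sub>R xi p) lam mu nu" by blast
  note SL = assms(2)
  obtain p where p: "p \<in> U" using assms(1) by blast
  obtain u where u: "Phi p *v u \<noteq> 0" using exPhi[OF SL p] by blast
  define y where "y = Phi p *v u"
  have y0: "y \<noteq> 0" using u y_def by simp
  have ey: "eta p \<bullet> y = 0" unfolding y_def using etaPhi[OF SL p] .
  define Q where "Q = Qv k lam mu n Phi xi eta"
  have QxiU: "\<And>q. q \<in> U \<Longrightarrow> ricci_op G xi q = (2 * real n) *\<^sub>R xi q"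
    using Qxi[OF SL kd RS] by blast
  have dQxi: "ricci_op G xi differentiable (at p)"
  proof (rule diff_loc[OF openU[OF SL] p])
    show "\<And>q. q \<in> U \<Longrightarrow> ricci_op G xi q = (2 * real n) *\<^sub>R xi q" by (rule QxiU)
    show "(\<lambda>q. (2 * real n) *\<^sub>R xi q) differentiable at p"
      by (intro differentiable_scaleR differentiable_const dxi[OF SL p])
  qed
  have QyU: "\<And>q. q \<in> U \<Longrightarrow> ricci_op G (\<lambda>_. y) q = Q q y"
    using ricci_op_Q[OF SL kd RS const_smooth] unfolding Q_def by blast
  have dQy: "ricci_op G (\<lambda>_. y) differentiable (at p)"
  proof (rule diff_loc[OF openU[OF SL] p QyU])
    have "(\<lambda>q. Phi q *v y) differentiable (at p)"
      using diff_mv[OF dPhi[OF SL p] differentiable_const] .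
    then show "(\<lambda>q. Q q y) differentiable (at p)"
      unfolding Q_def Qv_def
      using dk[OF SL kd RS p] dxi[OF SL p] deta[OF SL p]
      by (intro differentiable_diff differentiable_add differentiable_scaleR differentiable_mult
          differentiable_inner differentiable_const) auto
  qed
  have QW: "\<And>w. ricci_op G (\<lambda>_. w) p = Q p w"
    using ricci_op_Q[OF SL kd RS const_smooth p] unfolding Q_def by blast
  have xiZ: "\<And>q. q \<in> U \<Longrightarrow> xi q = 1 *\<^sub>R xi q" by simp
  have C1: "curv G xi (\<lambda>_. y) xi p = - y"
    using curv_xi[OF SL p dxi[OF SL p] differentiable_const xiZ] ey etaxi[OF SL p] by simp
  have C2: "curv G (ricci_op G xi) (\<lambda>_. y) xi p = - ((2 * real n) *\<^sub>R y)"
    using curv_xi[OF SL p dQxi differentiable_const xiZ] ey etaxi[OF SL p] QxiU[OF p] by simp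
  have eQy: "eta p \<bullet> Q p y = 0"
    unfolding Q_def Qv_def using ey etaPhi[OF SL p] by (simp add: inner_diff_right inner_add_right)
  have C3: "curv G xi (ricci_op G (\<lambda>_. y)) xi p = - Q p y"
    using curv_xi[OF SL p dxi[OF SL p] dQy xiZ] eQy etaxi[OF SL p] QyU[OF p] by simp
  have C4: "curv G xi (\<lambda>_. y) (ricci_op G xi) p = - ((2 * real n) *\<^sub>R y)"
    using curv_xi[OF SL p dxi[OF SL p] differentiable_const QxiU] ey etaxi[OF SL p] by simp
  have gy: "gmet G p y w = 0" for w
  proof -
    have "R4 G xi (\<lambda>_. y) xi (ricci_op G (\<lambda>_. w)) p - R4 G (ricci_op G xi) (\<lambda>_. y) xi (\<lambda>_. w) p
              - R4 G xi (ricci_op G (\<lambda>_. y)) xi (\<lambda>_. w) p - R4 G xi (\<lambda>_. y) (ricci_op G xi) (\<lambda>_. w) p = 0"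
      using assms(3) sxi[OF SL] const_smooth p unfolding QR_zero_def by blast
    then have "gmet G p (- y) (Q p w) - gmet G p (- ((2 * real n) *\<^sub>R y)) w - gmet G p (- Q p y) w
       - gmet G p (- ((2 * real n) *\<^sub>R y)) w = 0"
      unfolding R4_def C1 C2 C3 C4 QW .
    then have "4 * real n * gmet G p y w = 0"
      using Qsym[OF SL kd RS p, of y w] unfolding Q_def by (simp add: gm_simps algebra_simps)
    then show ?thesis using cardn(2)[OF SL] by simp
  qed
  have "y \<bullet> y = 0"
    using gy[of "matrix_inv (G p) *v y"] minv[OF Ginv[OF SL p]]
    unfolding gmet_def by (simp add: matrix_vector_mul_assoc)
  then show False using y0 by simp
qed

end
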